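(* Let $\{\omega_v:v\in\mathbb{Z}^2\}$ be i.i.d. real random variables with $\bar F(x)=\mathbb{P}(\omega>x)$, let $n\ge1$, $\beta_n>0$, $k_n>0$, and set $\tilde\omega_v=\omega_v\mathds{1}_{\{\omega_v\le k_n\}}$. Let $0=h_0<h_1<\dots<h_\ell$ be integers with $\ell\ge1$ and $h_{\ell-1}<n\le h_\ell$. Then for any real number $A>0$, \[ \mathbb{P}\big(\log Z^{\omega}_{n,\beta_n}-\log Z^{\tilde\omega}_{n,\beta_n}>A\big)\le|\mathbf{B}_1|\cdot\bar F(k_n)+\mathbb{P}\Big(\sum_{j=2}^{\ell}\exp(\beta_nM_j)\,\mathbf{P}^{\tilde\omega}_{n,\beta_n}(\mathcal{B}_{j-1}^c)>A\Big). \]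
   Context: $\mathscr{S}_0^n$ is the set of nearest-neighbour paths $\mathbf{s}=((i,s_i))_{i=0}^n$ with $s_0=0$, $|s_i-s_{i-1}|=1$. For an environment $\{\omega_v\}$ and $\mathcal{A}\subseteq\mathscr{S}_0^n$, $Z^{\omega}_{n,\beta}(\mathcal{A}):=2^{-n}\sum_{\mathbf{s}\in\mathcal{A}}\exp\big(\beta\sum_{i=1}^n\omega_{i,s_i}\big)$ and $Z^{\omega}_{n,\beta}:=Z^{\omega}_{n,\beta}(\mathscr{S}_0^n)$; the polymer measure is $\mathbf{P}^{\omega}_{n,\beta}(\mathcal{A})=Z^{\omega}_{n,\beta}(\mathcal{A})/Z^{\omega}_{n,\beta}$. For $j=1,\dots,\ell$: $\mathbf{B}_j=([0,n]\times(-h_j,h_j))\cap\mathbb{Z}^2$ with cardinality $|\mathbf{B}_j|$; $\mathcal{B}_j=\{\mathbf{s}\in\mathscr{S}_0^n:\max_{1\le i\le n}|s_i|<h_j\}$ and $\mathcal{B}_j^c=\mathscr{S}_0^n\setminus\mathcal{B}_j$; $M_j=\sum_{v\in\mathbf{B}_j}\omega_v\mathds{1}_{\{\omega_v>k_n\}}$. *)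

theory Defs
  imports "HOL-Probability.Probability"
begin

type_synonym site = "int \<times> int"

text \<open>Nearest-neighbour paths of length n started at 0; a path is a function
  s :: nat => int with s 0 = 0, |s i - s (i-1)| = 1 for 1 <= i <= n,
  normalised by s i = 0 for i > n (so the set is finite and in bijection with
  the set of paths ((i,s_i)) i=0..n).\<close>
definition paths :: "nat \<Rightarrow> (nat \<Rightarrow> int) set" where
  "paths n = {s. s 0 = 0 \<and> (\<forall>i\<in>{1..n}. \<bar>s i - s (i - 1)\<bar> = 1) \<and> (\<forall>i>n. s i = 0)}"

definition part_fn :: "(site \<Rightarrow> real) \<Rightarrow> nat \<Rightarrow> real \<Rightarrow> (nat \<Rightarrow> int) set \<Rightarrow> real" where
  "part_fn w n \<beta> S = (1 / 2 ^ n) * (\<Sum>s\<in>S. exp (\<beta> * (\<Sum>i=1..n. w (int i, s i))))"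

definition Zfull :: "(site \<Rightarrow> real) \<Rightarrow> nat \<Rightarrow> real \<Rightarrow> real" where
  "Zfull w n \<beta> = part_fn w n \<beta> (paths n)"

definition polymer :: "(site \<Rightarrow> real) \<Rightarrow> nat \<Rightarrow> real \<Rightarrow> (nat \<Rightarrow> int) set \<Rightarrow> real" where
  "polymer w n \<beta> S = part_fn w n \<beta> S / Zfull w n \<beta>"

definition box :: "nat \<Rightarrow> int \<Rightarrow> site set" where
  "box n h = {(i, x). 0 \<le> i \<and> i \<le> int n \<and> - h < x \<and> x < h}"

definition in_strip :: "nat \<Rightarrow> int \<Rightarrow> (nat \<Rightarrow> int) set" where
  "in_strip n h = {s \<in> paths n. \<forall>i\<in>{1..n}. \<bar>s i\<bar> < h}"

definition truncate_env :: "real \<Rightarrow> (site \<Rightarrow> real) \<Rightarrow> site \<Rightarrow> real" where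
  "truncate_env k w v = (if w v \<le> k then w v else 0)"

definition bigsum :: "real \<Rightarrow> (site \<Rightarrow> real) \<Rightarrow> nat \<Rightarrow> int \<Rightarrow> real" where
  "bigsum k w n h = (\<Sum>v\<in>box n h. if w v > k then w v else 0)"

end

theory Submission
  imports Defs
begin

lemma paths_abs:
  assumes "s \<in> paths n" "i \<le> n" shows "\<bar>s i\<bar> \<le> int i"
  using assms(2)
proof (induction i)
  case 0 then show ?case using assms(1) by (simp add: paths_def)
next
  case (Suc i)
  have "Suc i \<in> {1..n}" using Suc.prems by simp
  then have "\<bar>s (Suc i) - s (Suc i - 1)\<bar> = 1" using assms(1) unfolding paths_def by blast
  then have "\<bar>s (Suc i) - s i\<bar> = 1" by simp
  with Suc show ?case by linarith
qed

lemma paths_one: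
  assumes "s \<in> paths n" "n \<ge> 1" shows "\<bar>s 1\<bar> = 1"
proof -
  have "1 \<in> {1..n}" using assms(2) by simp
  then show ?thesis using assms(1) unfolding paths_def by fastforce
qed

lemma finite_paths: "finite (paths n)"
proof -
  have "paths n \<subseteq> (\<lambda>f i. if i \<le> n then f i else 0) ` (PiE {..n} (\<lambda>_. {-int n..int n}))"
  proof
    fix s assume s: "s \<in> paths n"
    have "s = (\<lambda>i. if i \<le> n then restrict s {..n} i else 0)"
      using s by (auto simp: paths_def fun_eq_iff)
    moreover have "restrict s {..n} \<in> PiE {..n} (\<lambda>_. {-int n..int n})"
    proof (rule PiE_I)
      fix i assume "i \<in> {..n}"
      then have "\<bar>s i\<bar> \<le> int i" "int i \<le> int n" using paths_abs[OF s] by auto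
      then show "restrict s {..n} i \<in> {-int n..int n}" using \<open>i \<in> {..n}\<close> by auto
    qed auto
    ultimately show "s \<in> (\<lambda>f i. if i \<le> n then f i else 0) ` (PiE {..n} (\<lambda>_. {-int n..int n}))"
      by blast
  qed
  then show ?thesis by (rule finite_subset) (intro finite_imageI finite_PiE, auto)
qed

lemma paths_ne: "(\<lambda>i. if i \<le> n then int i else 0) \<in> paths n"
  by (auto simp: paths_def)

lemma box_eq: "box n h = {0..int n} \<times> {-h<..<h}"
  by (auto simp: box_def)

lemma finite_box: "finite (box n h)"
  by (simp add: box_eq)

lemma sum_le_box:
  fixes g :: "site \<Rightarrow> real"
  assumes "\<And>v. g v \<ge> 0" and "\<And>i. i \<in> {1..n} \<Longrightarrow> (int i, s i) \<in> box n H \<or> g (int i, s i) = 0"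
  shows "(\<Sum>i=1..n. g (int i, s i)) \<le> (\<Sum>v\<in>box n H. g v)"
proof -
  let ?I = "{i\<in>{1..n}. (int i, s i) \<in> box n H}"
  have "(\<Sum>i=1..n. g (int i, s i)) = (\<Sum>i\<in>?I. g (int i, s i))"
    by (rule sum.mono_neutral_right) (simp, blast, use assms(2) in blast)
  also have "\<dots> = (\<Sum>v\<in>(\<lambda>i. (int i, s i)) ` ?I. g v)"
    by (subst sum.reindex) (auto simp: inj_on_def)
  also have "\<dots> \<le> (\<Sum>v\<in>box n H. g v)"
    by (rule sum_mono2) (auto simp: finite_box assms(1))
  finally show ?thesis .
qed

definition Sset :: "nat \<Rightarrow> int \<Rightarrow> site set" where
  "Sset n h1 = (box n h1 - {(0,0),(1,0)}) \<union> {(int n, int n), (int n, - int n)}"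

lemma card_Sset:
  assumes "h1 \<ge> 1" "n \<ge> 1" shows "card (Sset n h1) \<le> card (box n h1)"
proof -
  have sub: "{(0,0),(1,0)} \<subseteq> box n h1" using assms by (auto simp: box_def)
  have "card (Sset n h1) \<le> card (box n h1 - {(0,0),(1,0)}) + card {(int n, int n), (int n, - int n)}"
    unfolding Sset_def by (rule card_Un_le)
  also have "\<dots> \<le> (card (box n h1) - 2) + 2"
    using card_Diff_subset[OF _ sub] by (intro add_mono) (auto simp: card_insert_if)
  also have "\<dots> = card (box n h1)"
    using card_mono[OF finite_box sub] by simp
  finally show ?thesis .
qed

lemma finite_Sset: "finite (Sset n h1)"
  by (simp add: Sset_def finite_box)

lemma key_pointwise:
  fixes w :: "site \<Rightarrow> real" and n L :: nat and \<beta> k :: real and h :: "nat \<Rightarrow> int"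
  assumes n1: "n \<ge> 1" and bpos: "\<beta> > 0" and kpos: "k > 0"
    and h0: "h 0 = 0" and hL: "int n \<le> h L"
    and good: "\<forall>v\<in>Sset n (h 1). w v \<le> k"
    and s: "s \<in> paths n"
  shows "exp (\<beta> * (\<Sum>i=1..n. w (int i, s i)))
     \<le> exp (\<beta> * (\<Sum>i=1..n. truncate_env k w (int i, s i)))
       + (\<Sum>j=2..L. if s \<notin> in_strip n (h (j - 1))
           then exp (\<beta> * bigsum k w n (h j)) * exp (\<beta> * (\<Sum>i=1..n. truncate_env k w (int i, s i))) else 0)"
proof -
  define g where "g v = (if w v > k then w v else 0)" for v
  define Wt where "Wt = exp (\<beta> * (\<Sum>i=1..n. truncate_env k w (int i, s i)))"
  define G where "G = (\<Sum>i=1..n. g (int i, s i))"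
  have gnn: "\<And>v. g v \<ge> 0" using kpos by (auto simp: g_def)
  have gz: "\<And>v. v \<in> Sset n (h 1) \<Longrightarrow> g v = 0" using good by (auto simp: g_def)
  have "(\<Sum>i=1..n. w (int i, s i)) = (\<Sum>i=1..n. truncate_env k w (int i, s i)) + G"
    unfolding G_def sum.distrib[symmetric] by (rule sum.cong) (auto simp: g_def truncate_env_def)
  then have W: "exp (\<beta> * (\<Sum>i=1..n. w (int i, s i))) = Wt * exp (\<beta> * G)"
    by (simp add: Wt_def distrib_left exp_add)
  have Wtpos: "Wt > 0" by (simp add: Wt_def)
  define Q where "Q j \<longleftrightarrow> (\<forall>i\<in>{1..n}. \<bar>s i\<bar> < h j \<or> (int i, s i) \<in> Sset n (h 1))" for j
  have QL: "Q L"
    unfolding Q_def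
  proof
    fix i assume i: "i \<in> {1..n}"
    have a: "\<bar>s i\<bar> \<le> int i" using paths_abs[OF s] i by auto
    show "\<bar>s i\<bar> < h L \<or> (int i, s i) \<in> Sset n (h 1)"
    proof (cases "\<bar>s i\<bar> < h L")
      case False
      then have "i = n" "\<bar>s i\<bar> = int n" using a hL i by auto
      then show ?thesis by (auto simp: Sset_def abs_if split: if_splits)
    qed simp
  qed
  define j0 where "j0 = (LEAST j. Q j)"
  have Qj0: "Q j0" unfolding j0_def by (rule LeastI[of _ L]) (rule QL)
  have j0L: "j0 \<le> L" unfolding j0_def by (rule Least_le) (rule QL)
  have nn: "\<And>j. 0 \<le> (if s \<notin> in_strip n (h (j - 1))
           then exp (\<beta> * bigsum k w n (h j)) * Wt else 0)" using Wtpos by simp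
  show ?thesis
  proof (cases "j0 \<le> 1")
    case True
    have "\<forall>i\<in>{1..n}. (int i, s i) \<in> Sset n (h 1)"
    proof
      fix i assume i: "i \<in> {1..n}"
      show "(int i, s i) \<in> Sset n (h 1)"
      proof (cases "(int i, s i) \<in> Sset n (h 1)")
        case False
        with Qj0 i have lt: "\<bar>s i\<bar> < h j0" by (auto simp: Q_def)
        have "j0 = 1" using True lt h0 by (cases j0) auto
        then have "(int i, s i) \<in> box n (h 1)" using lt i by (auto simp: box_def)
        moreover have "i = 1 \<Longrightarrow> s i \<noteq> 0" using paths_one[OF s n1] by auto
        ultimately have "(int i, s i) \<in> Sset n (h 1)" using i by (auto simp: Sset_def)
        with False show ?thesis by simp
      qed
    qed
    then have "G = 0" unfolding G_def by (auto intro!: sum.neutral gz)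
    then have "exp (\<beta> * (\<Sum>i=1..n. w (int i, s i))) = Wt" using W by simp
    moreover have "0 \<le> (\<Sum>j=2..L. if s \<notin> in_strip n (h (j - 1))
           then exp (\<beta> * bigsum k w n (h j)) * Wt else 0)" by (rule sum_nonneg) (rule nn)
    ultimately show ?thesis unfolding Wt_def by linarith
  next
    case False
    have "\<not> Q (j0 - 1)" unfolding j0_def by (rule not_less_Least) (use False j0_def in auto)
    then obtain i where i: "i \<in> {1..n}" "\<not> \<bar>s i\<bar> < h (j0 - 1)" by (auto simp: Q_def)
    then have notin: "s \<notin> in_strip n (h (j0 - 1))" by (auto simp: in_strip_def)
    have "G \<le> (\<Sum>v\<in>box n (h j0). g v)"
      unfolding G_def
    proof (rule sum_le_box[OF gnn])
      fix i assume i: "i \<in> {1..n}"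
      then have "\<bar>s i\<bar> < h j0 \<or> (int i, s i) \<in> Sset n (h 1)" using Qj0 by (auto simp: Q_def)
      then show "(int i, s i) \<in> box n (h j0) \<or> g (int i, s i) = 0"
      proof
        assume "\<bar>s i\<bar> < h j0" then show ?thesis using i by (auto simp: box_def abs_less_iff)
      qed (use gz in auto)
    qed
    also have "\<dots> = bigsum k w n (h j0)" by (simp add: bigsum_def g_def)
    finally have "exp (\<beta> * G) \<le> exp (\<beta> * bigsum k w n (h j0))" using bpos by simp
    then have "exp (\<beta> * (\<Sum>i=1..n. w (int i, s i))) \<le> exp (\<beta> * bigsum k w n (h j0)) * Wt"
      using W Wtpos by (simp add: mult.commute)
    also have "\<dots> = (if s \<notin> in_strip n (h (j0 - 1))
           then exp (\<beta> * bigsum k w n (h j0)) * Wt else 0)" using notin by simp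
    also have "\<dots> \<le> (\<Sum>j=2..L. if s \<notin> in_strip n (h (j - 1))
           then exp (\<beta> * bigsum k w n (h j)) * Wt else 0)"
      by (rule member_le_sum[where f="\<lambda>j. if s \<notin> in_strip n (h (j - 1))
           then exp (\<beta> * bigsum k w n (h j)) * Wt else 0"]) (use False j0L nn in auto)
    finally show ?thesis unfolding Wt_def using Wtpos[unfolded Wt_def] by linarith
  qed
qed

lemma key_ln:
  fixes w :: "site \<Rightarrow> real" and n L :: nat and \<beta> k :: real and h :: "nat \<Rightarrow> int"
  assumes n1: "n \<ge> 1" and bpos: "\<beta> > 0" and kpos: "k > 0"
    and h0: "h 0 = 0" and hL: "int n \<le> h L"
    and good: "\<forall>v\<in>Sset n (h 1). w v \<le> k"
  shows "ln (Zfull w n \<beta>) - ln (Zfull (truncate_env k w) n \<beta>)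
     \<le> (\<Sum>j=2..L. exp (\<beta> * bigsum k w n (h j))
                  * polymer (truncate_env k w) n \<beta> (paths n - in_strip n (h (j - 1))))"
proof -
  define t where "t = truncate_env k w"
  define P where "P = paths n"
  define W where "W s = exp (\<beta> * (\<Sum>i=1..n. w (int i, s i)))" for s
  define Wt where "Wt s = exp (\<beta> * (\<Sum>i=1..n. t (int i, s i)))" for s
  define e where "e j = exp (\<beta> * bigsum k w n (h j))" for j
  define c :: real where "c = 1 / 2 ^ n"
  have finP: "finite P" by (simp add: P_def finite_paths)
  have neP: "P \<noteq> {}" using paths_ne unfolding P_def by blast
  have cpos: "c > 0" by (simp add: c_def)
  have "(\<Sum>s\<in>P. W s) \<le> (\<Sum>s\<in>P. Wt s + (\<Sum>j=2..L. if s \<notin> in_strip n (h (j - 1)) then e j * Wt s else 0))"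
    by (rule sum_mono) (unfold W_def Wt_def e_def t_def P_def, rule key_pointwise[OF n1 bpos kpos h0 hL good])
  also have "\<dots> = (\<Sum>s\<in>P. Wt s) + (\<Sum>j=2..L. \<Sum>s\<in>P. if s \<notin> in_strip n (h (j - 1)) then e j * Wt s else 0)"
    by (simp add: sum.distrib sum.swap[of _ P])
  also have "(\<Sum>j=2..L. \<Sum>s\<in>P. if s \<notin> in_strip n (h (j - 1)) then e j * Wt s else 0)
      = (\<Sum>j=2..L. e j * (\<Sum>s\<in>P - in_strip n (h (j - 1)). Wt s))"
  proof (rule sum.cong[OF refl])
    fix j
    have "P - in_strip n (h (j - 1)) = {s\<in>P. s \<notin> in_strip n (h (j - 1))}" by auto
    then show "(\<Sum>s\<in>P. if s \<notin> in_strip n (h (j - 1)) then e j * Wt s else 0)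
      = e j * (\<Sum>s\<in>P - in_strip n (h (j - 1)). Wt s)"
      by (simp add: sum.inter_filter[OF finP] sum_distrib_left if_distrib cong: if_cong)
  qed
  finally have S: "(\<Sum>s\<in>P. W s) \<le> (\<Sum>s\<in>P. Wt s) + (\<Sum>j=2..L. e j * (\<Sum>s\<in>P - in_strip n (h (j - 1)). Wt s))" .
  define Zt where "Zt = Zfull t n \<beta>"
  define Zw where "Zw = Zfull w n \<beta>"
  have Zt_eq: "Zt = c * (\<Sum>s\<in>P. Wt s)" by (simp add: Zt_def Zfull_def part_fn_def c_def P_def Wt_def)
  have Zw_eq: "Zw = c * (\<Sum>s\<in>P. W s)" by (simp add: Zw_def Zfull_def part_fn_def c_def P_def W_def)
  have "(\<Sum>s\<in>P. Wt s) > 0" using finP neP by (intro sum_pos) (auto simp: Wt_def)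
  then have Ztpos: "Zt > 0" unfolding Zt_eq using cpos by simp
  have "(\<Sum>s\<in>P. W s) > 0" using finP neP by (intro sum_pos) (auto simp: W_def)
  then have Zwpos: "Zw > 0" unfolding Zw_eq using cpos by simp
  have pol: "Zt * polymer t n \<beta> B = c * (\<Sum>s\<in>B. Wt s)" for B
    using Ztpos by (simp add: polymer_def Zt_def[symmetric] part_fn_def c_def Wt_def)
  define X where "X = (\<Sum>j=2..L. e j * polymer t n \<beta> (P - in_strip n (h (j - 1))))"
  have "Zw \<le> c * (\<Sum>s\<in>P. Wt s) + (\<Sum>j=2..L. e j * (c * (\<Sum>s\<in>P - in_strip n (h (j - 1)). Wt s)))"
    unfolding Zw_eq using mult_left_mono[OF S, of c] cpos
    by (simp add: distrib_left sum_distrib_left mult.assoc mult.left_commute)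
  also have "\<dots> = Zt * (1 + X)"
  proof -
    have "(\<Sum>j=2..L. e j * (c * (\<Sum>s\<in>P - in_strip n (h (j - 1)). Wt s)))
        = (\<Sum>j=2..L. Zt * (e j * polymer t n \<beta> (P - in_strip n (h (j - 1)))))"
      by (rule sum.cong[OF refl]) (metis pol mult.left_commute)
    then show ?thesis unfolding Zt_eq[symmetric] X_def by (simp add: distrib_left sum_distrib_left)
  qed
  finally have "Zw / Zt \<le> 1 + X" using Ztpos by (simp add: divide_le_eq mult.commute)
  moreover have "ln Zw - ln Zt = ln (Zw / Zt)" using Ztpos Zwpos by (simp add: ln_div)
  moreover have "ln (Zw / Zt) \<le> Zw / Zt - 1" using Ztpos Zwpos by (intro ln_le_minus_one) simp
  ultimately have "ln Zw - ln Zt \<le> X" by linarith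
  then show ?thesis by (simp add: Zw_def Zt_def X_def t_def e_def P_def)
qed

theorem lemma2p2:
  fixes M :: "'a measure" and \<omega> :: "site \<Rightarrow> 'a \<Rightarrow> real"
    and n L :: nat and \<beta> k A :: real and h :: "nat \<Rightarrow> int"
  assumes "prob_space M"
    and "prob_space.indep_vars M (\<lambda>_. borel) \<omega> UNIV"
    and "\<And>v. distr M borel (\<omega> v) = distr M borel (\<omega> (0, 0))"
    and "n \<ge> 1" and "\<beta> > 0" and "k > 0"
    and "L \<ge> 1" and "h 0 = 0" and "\<And>j. j < L \<Longrightarrow> h j < h (Suc j)"
    and "h (L - 1) < int n" and "int n \<le> h L"
    and "A > 0"
  shows "measure M {x \<in> space M.
            ln (Zfull (\<lambda>v. \<omega> v x) n \<beta>) - ln (Zfull (truncate_env k (\<lambda>v. \<omega> v x)) n \<beta>) > A}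
         \<le> real (card (box n (h 1))) * measure M {x \<in> space M. \<omega> (0, 0) x > k}
           + measure M {x \<in> space M.
               (\<Sum>j=2..L. exp (\<beta> * bigsum k (\<lambda>v. \<omega> v x) n (h j))
                  * polymer (truncate_env k (\<lambda>v. \<omega> v x)) n \<beta>
                      (paths n - in_strip n (h (j - 1)))) > A}"
proof -
  interpret P: prob_space M by fact
  have rv: "\<And>v. \<omega> v \<in> borel_measurable M"
    using assms(2) unfolding P.indep_vars_def by auto
  define F where "F x = (\<Sum>j=2..L. exp (\<beta> * bigsum k (\<lambda>v. \<omega> v x) n (h j))
                  * polymer (truncate_env k (\<lambda>v. \<omega> v x)) n \<beta>
                      (paths n - in_strip n (h (j - 1))))" for x
  have m1: "(\<lambda>x. truncate_env k (\<lambda>v. \<omega> v x) v) \<in> borel_measurable M" for v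
    unfolding truncate_env_def using rv by measurable
  have m2: "(\<lambda>x. part_fn (truncate_env k (\<lambda>v. \<omega> v x)) n \<beta> B) \<in> borel_measurable M" for B
    unfolding part_fn_def using m1 by measurable
  have m3: "(\<lambda>x. bigsum k (\<lambda>v. \<omega> v x) n H) \<in> borel_measurable M" for H
    unfolding bigsum_def using rv by measurable
  have Fm: "F \<in> borel_measurable M"
    unfolding F_def polymer_def Zfull_def using m2 m3 by measurable
  define S where "S = Sset n (h 1)"
  define E where "E v = {x \<in> space M. \<omega> v x > k}" for v
  define p where "p = measure M {x \<in> space M. \<omega> (0, 0) x > k}"
  have Es: "E v \<in> sets M" for v unfolding E_def using rv by measurable
  have Ep: "measure M (E v) = p" for v
  proof -
    have "measure M (E v) = measure (distr M borel (\<omega> v)) {k<..}"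
      by (subst measure_distr[OF rv greaterThan_borel]) (auto simp: E_def intro!: arg_cong[where f="measure M"])
    also have "\<dots> = measure (distr M borel (\<omega> (0,0))) {k<..}" using assms(3)[of v] by (rule arg_cong)
    also have "\<dots> = p"
      by (subst measure_distr[OF rv greaterThan_borel]) (auto simp: p_def intro!: arg_cong[where f="measure M"])
    finally show ?thesis .
  qed
  define Sec where "Sec = {x \<in> space M. F x > A}"
  have Secs: "Sec \<in> sets M" unfolding Sec_def using Fm by measurable
  have Eus: "(\<Union>v\<in>S. E v) \<in> sets M" using Es finite_Sset[of n "h 1"] unfolding S_def by blast
  have h1: "h 1 \<ge> 1" using assms(9)[of 0] assms(7) assms(8) by simp
  let ?LHS = "{x \<in> space M.
            ln (Zfull (\<lambda>v. \<omega> v x) n \<beta>) - ln (Zfull (truncate_env k (\<lambda>v. \<omega> v x)) n \<beta>) > A}"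
  have sub: "?LHS \<subseteq> (\<Union>v\<in>S. E v) \<union> Sec"
  proof
    fix x assume x: "x \<in> ?LHS"
    show "x \<in> (\<Union>v\<in>S. E v) \<union> Sec"
    proof (cases "x \<in> (\<Union>v\<in>S. E v)")
      case False
      then have "\<forall>v\<in>Sset n (h 1). \<omega> v x \<le> k" using x by (auto simp: S_def E_def not_less)
      from key_ln[where w="\<lambda>v. \<omega> v x", OF assms(4) assms(5) assms(6) assms(8) assms(11) this]
      have "ln (Zfull (\<lambda>v. \<omega> v x) n \<beta>) - ln (Zfull (truncate_env k (\<lambda>v. \<omega> v x)) n \<beta>) \<le> F x"
        by (simp add: F_def)
      then show ?thesis using x by (auto simp: Sec_def)
    qed simp
  qed
  have "measure M ?LHS \<le> measure M ((\<Union>v\<in>S. E v) \<union> Sec)"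
    by (rule P.finite_measure_mono[OF sub]) (use Eus Secs in blast)
  also have "\<dots> \<le> measure M (\<Union>v\<in>S. E v) + measure M Sec"
    by (rule measure_Un_le[OF Eus Secs])
  also have "measure M (\<Union>v\<in>S. E v) \<le> (\<Sum>v\<in>S. measure M (E v))"
    by (rule P.finite_measure_subadditive_finite) (use Es finite_Sset in \<open>auto simp: S_def\<close>)
  also have "\<dots> = real (card S) * p" by (simp add: Ep)
  also have "\<dots> \<le> real (card (box n (h 1))) * p"
    using card_Sset[OF h1 assms(4)] by (intro mult_right_mono) (auto simp: S_def p_def)
  finally show ?thesis by (simp add: p_def Sec_def F_def)
qed

end
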